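(* For every simple game $v$ on $n\ge 2$ players and every player $i$ that is not a dictator in $v$, we have $\mathrm{PGI}_i(v)\le\frac12$ and $\mathrm{DP}_i(v)\le\frac12$.
   Context: A simple game on $N=\{1,\dots,n\}$ is a surjective, monotone map $v\colon 2^N\to\{0,1\}$. A coalition $S$ is winning if $v(S)=1$; it is minimal winning if it is winning and all proper subsets are losing. Player $j$ is a null player if $v(S)=v(S\cup\{j\})$ for all $S\subseteq N\setminus\{j\}$; player $i$ is a dictator if $v(\{i\})=1$ and all other players are null players. Public Good index: $\mathrm{PGI}_i(v)=m_i/\sum_{j\in N}m_j$, where $m_j$ is the number of minimal winning coalitions containing $j$. Deegan–Packel index: $\mathrm{DP}_i(v)=d_i/\sum_{j\in N}d_j$, where $d_j=\sum_{S\ni j,\ S\text{ minimal winning}}\frac{1}{|S|}$. *)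

theory Defs
  imports Main Complex_Main
begin

text \<open>Players are N = {1..n}; a game is a map v from subsets of N to {0,1}.
  Values of v outside Pow N are irrelevant.\<close>

definition simple_game :: "nat \<Rightarrow> (nat set \<Rightarrow> nat) \<Rightarrow> bool" where
  "simple_game n v \<longleftrightarrow>
     (\<forall>S \<in> Pow {1..n}. v S \<in> {0, 1}) \<and>
     (\<forall>b \<in> {0, 1}. \<exists>S \<in> Pow {1..n}. v S = b) \<and>
     (\<forall>S T. S \<subseteq> T \<and> T \<subseteq> {1..n} \<longrightarrow> v S \<le> v T)"

definition winning :: "nat \<Rightarrow> (nat set \<Rightarrow> nat) \<Rightarrow> nat set \<Rightarrow> bool" where
  "winning n v S \<longleftrightarrow> S \<subseteq> {1..n} \<and> v S = 1"

definition minimal_winning :: "nat \<Rightarrow> (nat set \<Rightarrow> nat) \<Rightarrow> nat set \<Rightarrow> bool" where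
  "minimal_winning n v S \<longleftrightarrow> winning n v S \<and> (\<forall>T. T \<subset> S \<longrightarrow> \<not> winning n v T)"

definition MW :: "nat \<Rightarrow> (nat set \<Rightarrow> nat) \<Rightarrow> nat set set" where
  "MW n v = {S. minimal_winning n v S}"

definition null_player :: "nat \<Rightarrow> (nat set \<Rightarrow> nat) \<Rightarrow> nat \<Rightarrow> bool" where
  "null_player n v j \<longleftrightarrow> (\<forall>S. S \<subseteq> {1..n} - {j} \<longrightarrow> v S = v (S \<union> {j}))"

definition dictator :: "nat \<Rightarrow> (nat set \<Rightarrow> nat) \<Rightarrow> nat \<Rightarrow> bool" where
  "dictator n v i \<longleftrightarrow> v {i} = 1 \<and> (\<forall>j \<in> {1..n} - {i}. null_player n v j)"

definition mw_count :: "nat \<Rightarrow> (nat set \<Rightarrow> nat) \<Rightarrow> nat \<Rightarrow> nat" where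
  "mw_count n v j = card {S \<in> MW n v. j \<in> S}"

definition PGI :: "nat \<Rightarrow> (nat set \<Rightarrow> nat) \<Rightarrow> nat \<Rightarrow> real" where
  "PGI n v i = real (mw_count n v i) / (\<Sum>j\<in>{1..n}. real (mw_count n v j))"

definition dp_weight :: "nat \<Rightarrow> (nat set \<Rightarrow> nat) \<Rightarrow> nat \<Rightarrow> real" where
  "dp_weight n v j = (\<Sum>S\<in>{S \<in> MW n v. j \<in> S}. 1 / real (card S))"

definition DP :: "nat \<Rightarrow> (nat set \<Rightarrow> nat) \<Rightarrow> nat \<Rightarrow> real" where
  "DP n v i = dp_weight n v i / (\<Sum>j\<in>{1..n}. dp_weight n v j)"

end

theory Submission
  imports Defs
begin

lemma swap_count:
  fixes F :: "nat set set" and w :: "nat set \<Rightarrow> real"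
  assumes "finite F" "finite N" "\<forall>S\<in>F. S \<subseteq> N"
  shows "(\<Sum>j\<in>N. \<Sum>S\<in>{S\<in>F. j\<in>S}. w S) = (\<Sum>S\<in>F. real (card S) * w S)"
proof -
  have "(\<Sum>j\<in>N. \<Sum>S\<in>{S\<in>F. j\<in>S}. w S) = (\<Sum>j\<in>N. \<Sum>S\<in>F. if j\<in>S then w S else 0)"
    using assms(1) by (simp add: sum.inter_filter)
  also have "\<dots> = (\<Sum>S\<in>F. \<Sum>j\<in>N. if j\<in>S then w S else 0)" by (rule sum.swap)
  also have "\<dots> = (\<Sum>S\<in>F. real (card S) * w S)"
  proof (rule sum.cong[OF refl])
    fix S assume "S \<in> F"
    hence "{j\<in>N. j\<in>S} = S" using assms(3) by auto
    moreover have "(\<Sum>j\<in>N. if j\<in>S then w S else 0) = (\<Sum>j\<in>{j\<in>N. j\<in>S}. w S)"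
      using assms(2) by (rule sum.inter_filter[symmetric])
    ultimately show "(\<Sum>j\<in>N. if j\<in>S then w S else 0) = real (card S) * w S"
      by (metis (no_types) sum_constant)
  qed
  finally show ?thesis .
qed

lemma sum_nonneg_special:
  fixes F :: "nat set set" and h :: "nat set \<Rightarrow> real"
  assumes "finite F" "\<forall>S\<in>F. S \<noteq> X \<longrightarrow> h S \<ge> 0"
    "X \<in> F \<Longrightarrow> \<exists>T\<in>F. T \<noteq> X \<and> h T \<ge> 1" "h X \<ge> -1"
  shows "sum h F \<ge> 0"
proof (cases "X \<in> F")
  case False thus ?thesis using assms(2) by (intro sum_nonneg) auto
next
  case True
  then obtain T where T: "T\<in>F" "T \<noteq> X" "h T \<ge> 1" using assms(3) by auto
  have "sum h F = h X + sum h (F - {X})" by (rule sum.remove[OF assms(1) True])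
  also have "sum h (F - {X}) = h T + sum h (F - {X} - {T})"
    using T assms(1) by (metis DiffI finite_Diff singletonD sum.remove)
  also have "sum h (F - {X} - {T}) \<ge> 0" using assms(2) by (intro sum_nonneg) auto
  ultimately show ?thesis using T assms(4) by linarith
qed

lemma exists_mw:
  assumes "finite W" "winning n v W"
  shows "\<exists>T\<subseteq>W. minimal_winning n v T"
  using assms
proof (induction W rule: finite_psubset_induct)
  case (psubset W)
  show ?case
  proof (cases "minimal_winning n v W")
    case True thus ?thesis by blast
  next
    case False
    then obtain T where T: "T \<subset> W" "winning n v T"
      using psubset.prems(1) unfolding minimal_winning_def by blast
    have "finite T" using T(1) psubset.hyps(1) by (meson finite_subset psubset_imp_subset)
    then obtain U where "U \<subseteq> T" "minimal_winning n v U"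
      using psubset.IH[OF T(1) T(2)] by blast
    thus ?thesis using T(1) by (meson order_trans psubset_imp_subset)
  qed
qed

lemma half_aux:
  fixes a D :: real
  assumes "2 * a \<le> D" "0 \<le> a"
  shows "a / D \<le> 1/2"
proof (cases "D = 0")
  case True thus ?thesis by simp
next
  case False
  hence "D > 0" using assms by linarith
  thus ?thesis using assms by (simp add: divide_le_eq)
qed

theorem theorem4:
  fixes n :: nat and v :: "nat set \<Rightarrow> nat" and i :: nat
  assumes "n \<ge> 2"
    and "simple_game n v"
    and "i \<in> {1..n}"
    and "\<not> dictator n v i"
  shows "PGI n v i \<le> 1/2 \<and> DP n v i \<le> 1/2"
proof -
  note sg = assms(2)[unfolded simple_game_def]
  have vals: "\<And>S. S \<subseteq> {1..n} \<Longrightarrow> v S = 0 \<or> v S = 1" using sg by auto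
  have mono: "\<And>S T. S \<subseteq> T \<Longrightarrow> T \<subseteq> {1..n} \<Longrightarrow> v S \<le> v T" using sg by auto
  obtain L where L: "L \<subseteq> {1..n}" "v L = 0" using sg by auto
  have v0: "v {} = 0" using mono[of "{}" L] L by auto
  let ?F = "MW n v"
  have Fsub: "\<forall>S\<in>?F. S \<subseteq> {1..n}" by (auto simp: MW_def minimal_winning_def winning_def)
  have finF: "finite ?F"
    by (rule finite_subset[of _ "Pow {1..n}"]) (use Fsub in auto)
  have Fne: "\<forall>S\<in>?F. S \<noteq> {}" using v0 by (auto simp: MW_def minimal_winning_def winning_def)
  have Fcard: "\<forall>S\<in>?F. card S \<ge> 1"
  proof
    fix S assume "S \<in> ?F"
    hence "finite S" "S \<noteq> {}" using Fsub Fne finite_subset[of S "{1..n}"] by auto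
    thus "card S \<ge> 1" by (simp add: Suc_le_eq card_gt_0_iff)
  qed
  have big: "\<forall>S\<in>?F. S \<noteq> {i} \<longrightarrow> i \<in> S \<longrightarrow> card S \<ge> 2"
  proof (intro ballI impI)
    fix S assume S: "S \<in> ?F" "S \<noteq> {i}" "i \<in> S"
    have "finite S" using S Fsub finite_subset[of S "{1..n}"] by auto
    have "\<not> card S \<le> 1"
    proof
      assume "card S \<le> 1"
      hence "S = {i}" using card_seteq[of S "{i}"] S(3) \<open>finite S\<close> by simp
      thus False using S(2) by simp
    qed
    thus "card S \<ge> 2" by simp
  qed
  have other: "{i} \<in> ?F \<Longrightarrow> \<exists>T\<in>?F. i \<notin> T"
  proof -
    assume Ii: "{i} \<in> ?F"
    hence vi: "v {i} = 1" by (simp add: MW_def minimal_winning_def winning_def)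
    then obtain j where j: "j \<in> {1..n} - {i}" "\<not> null_player n v j"
      using assms(4) vi unfolding dictator_def by blast
    then obtain S where S: "S \<subseteq> {1..n} - {j}" "v S \<noteq> v (S \<union> {j})"
      unfolding null_player_def by auto
    have Sj: "S \<union> {j} \<subseteq> {1..n}" using S j by auto
    have "v S \<le> v (S \<union> {j})" using mono[OF _ Sj] by auto
    hence vS: "v S = 0" "v (S \<union> {j}) = 1" using vals[of S] vals[OF Sj] S by auto
    have "finite (S \<union> {j})" using Sj finite_subset by blast
    then obtain T where T: "T \<subseteq> S \<union> {j}" "minimal_winning n v T"
      using exists_mw[of "S \<union> {j}" n v] Sj vS by (auto simp: winning_def)
    have jT: "j \<in> T"
    proof (rule ccontr)
      assume "j \<notin> T"
      hence "T \<subseteq> S" using T by auto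
      hence "v T \<le> v S" using mono S by auto
      thus False using T vS by (auto simp: minimal_winning_def winning_def)
    qed
    have "i \<notin> T"
    proof
      assume "i \<in> T"
      hence "{i} \<subset> T" using jT j by auto
      thus False using T Ii by (auto simp: minimal_winning_def MW_def)
    qed
    thus ?thesis using T by (auto simp: MW_def)
  qed
  have D1: "(\<Sum>j\<in>{1..n}. real (mw_count n v j)) = (\<Sum>S\<in>?F. real (card S) * 1)"
    unfolding mw_count_def
    using swap_count[OF finF _ Fsub, of "\<lambda>_. 1"] by simp
  have m1: "real (mw_count n v i) = (\<Sum>S\<in>?F. if i \<in> S then 1 else 0)"
    unfolding mw_count_def using finF by (simp add: sum.inter_filter[symmetric])
  have ineq1: "(\<Sum>S\<in>?F. real (card S) - 2 * (if i \<in> S then 1 else 0)) \<ge> 0"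
  proof (rule sum_nonneg_special[OF finF, where X="{i}"])
    show "\<forall>S\<in>?F. S \<noteq> {i} \<longrightarrow> real (card S) - 2 * (if i \<in> S then 1 else 0) \<ge> 0"
    proof (intro ballI impI)
      fix S assume S: "S \<in> ?F" "S \<noteq> {i}"
      have "card S \<ge> 1" using Fcard S by blast
      moreover have "i \<in> S \<Longrightarrow> card S \<ge> 2" using big S by blast
      ultimately show "real (card S) - 2 * (if i \<in> S then 1 else 0) \<ge> 0" by auto
    qed
    show "\<exists>T\<in>?F. T \<noteq> {i} \<and> 1 \<le> real (card T) - 2 * (if i \<in> T then 1 else 0)"
      if Ii: "{i} \<in> ?F"
    proof -
      obtain T where T: "T \<in> ?F" "i \<notin> T" using other[OF Ii] by blast
      have "card T \<ge> 1" using Fcard T by blast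
      thus ?thesis using T by (intro bexI[of _ T]) auto
    qed
  qed simp
  have pgi: "PGI n v i \<le> 1/2"
  proof -
    have "2 * real (mw_count n v i) \<le> (\<Sum>j\<in>{1..n}. real (mw_count n v j))"
      using ineq1 unfolding D1 m1 by (simp add: sum_subtractf sum_distrib_left)
    moreover have "0 \<le> real (mw_count n v i)" by simp
    ultimately show ?thesis unfolding PGI_def
      by (rule half_aux)
  qed
  have D2: "(\<Sum>j\<in>{1..n}. dp_weight n v j) = (\<Sum>S\<in>?F. real (card S) * (1 / real (card S)))"
    unfolding dp_weight_def
    using swap_count[OF finF _ Fsub, of "\<lambda>S. 1 / real (card S)"] by simp
  have D2': "(\<Sum>S\<in>?F. real (card S) * (1 / real (card S))) = (\<Sum>S\<in>?F. 1)"
    using Fcard by (intro sum.cong) auto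
  have d1: "dp_weight n v i = (\<Sum>S\<in>?F. if i \<in> S then 1 / real (card S) else 0)"
    unfolding dp_weight_def using finF by (simp add: sum.inter_filter)
  have ineq2: "(\<Sum>S\<in>?F. 1 - 2 * (if i \<in> S then 1 / real (card S) else 0)) \<ge> 0"
  proof (rule sum_nonneg_special[OF finF, where X="{i}"])
    show "\<forall>S\<in>?F. S \<noteq> {i} \<longrightarrow> 1 - 2 * (if i \<in> S then 1 / real (card S) else 0) \<ge> 0"
    proof (intro ballI impI)
      fix S assume S: "S \<in> ?F" "S \<noteq> {i}"
      have "i \<in> S \<Longrightarrow> card S \<ge> 2" using big S by blast
      thus "1 - 2 * (if i \<in> S then 1 / real (card S) else 0) \<ge> (0::real)"
        by (auto simp: divide_simps)
    qed
    show "\<exists>T\<in>?F. T \<noteq> {i} \<and> 1 \<le> 1 - 2 * (if i \<in> T then 1 / real (card T) else 0)"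
      if Ii: "{i} \<in> ?F"
    proof -
      obtain T where T: "T \<in> ?F" "i \<notin> T" using other[OF Ii] by blast
      thus ?thesis using T by (intro bexI[of _ T]) auto
    qed
  qed simp
  have dp: "DP n v i \<le> 1/2"
  proof -
    have "2 * dp_weight n v i \<le> (\<Sum>j\<in>{1..n}. dp_weight n v j)"
      using ineq2 unfolding D2 D2' d1 by (simp add: sum_subtractf sum_distrib_left)
    moreover have "0 \<le> dp_weight n v i" unfolding dp_weight_def by (intro sum_nonneg) simp
    ultimately show ?thesis unfolding DP_def
      by (rule half_aux)
  qed
  show ?thesis using pgi dp by simp
qed

end
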